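(* Let $\Sigma=(V,E,c)$ be an undirected network with exactly three boundary vertices $A_1,A_2,A_3$. Then $\Sigma$ decomposes into three subnetworks $\Sigma_{ij}=(V,E,c_{ij})$, $1\le i<j\le 3$ (i.e. $\sum_{i<j}c_{ij}^e=c^e$ for all $e\in E$ with each $c_{ij}\ge 0$), such that for each $i<j$ $$S_{\Sigma_{ij}}(A_i)=S_{\Sigma_{ij}}(A_j)=\tfrac12 I(A_i:A_j),\qquad S_{\Sigma_{ij}}(A_k)=0\ \ (k\neq i,j),$$ where $I(A_i:A_j)=S_\Sigma(A_i)+S_\Sigma(A_j)-S_\Sigma(A_iA_j)$. In particular, $\Sigma_{ij}$ connects only $A_i$ and $A_j$ (no other pair of distinct boundary vertices is joined by a path of positive-capacity edges in $\Sigma_{ij}$), $\sum_{i<j}S_{\Sigma_{ij}}(A_k)=S_\Sigma(A_k)$ for every $k$, and the $A_i:A_j$ mutual information computed on $\Sigma_{ij}$ equals that computed on $\Sigma$.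
   Context: An undirected network $\Sigma=(V,E,c)$ is a finite graph with capacity function $c:E\to\mathbb R_{\ge0}$ and a designated set $\partial\Sigma\subset V$ of boundary vertices. Fix an arbitrary orientation of each edge; a flow is a function $v:E\to\mathbb R$ with $|v^e|\le c^e$ for all $e$ and with conservation at every non-boundary vertex (net flow into the vertex equals net flow out, negative values meaning flow against the chosen orientation). Extending $v$ to reversed edges by $v^{\tilde e}=-v^e$, the flux of $v$ out of $A\subset\partial\Sigma$ is $S_\Sigma(A;v)=\sum_{e\in E\sqcup\tilde E:\,s(e)\in A}v^e$, and $S_\Sigma(A)$ is the maximum of $S_\Sigma(A;v)$ over all flows. A subnetwork of $\Sigma$ is a network $(V,E,c_1)$ with $0\le c_1\le c$ edgewise and the same boundary; $\Sigma$ decomposes into subnetworks $(V,E,c_i)$ if their capacities sum to $c$ on every edge. Here $A_iA_j$ denotes the boundary set $\{A_i,A_j\}$. *)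

theory Defs
  imports Main "HOL-Library.Extended_Real" Complex_Main
begin

text \<open>An undirected network: finite vertex set V, finite edge set E, each edge e
  carrying an arbitrary fixed orientation from src e to tgt e, a capacity c,
  and a set of boundary vertices bd.\<close>

definition network ::
  "'v set \<Rightarrow> 'e set \<Rightarrow> ('e \<Rightarrow> 'v) \<Rightarrow> ('e \<Rightarrow> 'v) \<Rightarrow> ('e \<Rightarrow> real) \<Rightarrow> 'v set \<Rightarrow> bool" where
  "network V E src tgt c bd \<longleftrightarrow> finite V \<and> finite E \<and>
     (\<forall>e\<in>E. src e \<in> V \<and> tgt e \<in> V) \<and> (\<forall>e\<in>E. 0 \<le> c e) \<and> bd \<subseteq> V"

definition is_flow ::
  "'v set \<Rightarrow> 'e set \<Rightarrow> ('e \<Rightarrow> 'v) \<Rightarrow> ('e \<Rightarrow> 'v) \<Rightarrow> ('e \<Rightarrow> real) \<Rightarrow> 'v set \<Rightarrow> ('e \<Rightarrow> real) \<Rightarrow> bool" where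
  "is_flow V E src tgt c bd v \<longleftrightarrow>
     (\<forall>e\<in>E. \<bar>v e\<bar> \<le> c e) \<and>
     (\<forall>x\<in>V - bd. (\<Sum>e\<in>{e\<in>E. tgt e = x}. v e) = (\<Sum>e\<in>{e\<in>E. src e = x}. v e))"

text \<open>Flux out of A: sum over E and reversed edges (source tgt e, value - v e)
  of edges whose source lies in A.\<close>
definition flux :: "'e set \<Rightarrow> ('e \<Rightarrow> 'v) \<Rightarrow> ('e \<Rightarrow> 'v) \<Rightarrow> 'v set \<Rightarrow> ('e \<Rightarrow> real) \<Rightarrow> real" where
  "flux E src tgt A v = (\<Sum>e\<in>{e\<in>E. src e \<in> A}. v e) + (\<Sum>e\<in>{e\<in>E. tgt e \<in> A}. - v e)"

definition S_net ::
  "'v set \<Rightarrow> 'e set \<Rightarrow> ('e \<Rightarrow> 'v) \<Rightarrow> ('e \<Rightarrow> 'v) \<Rightarrow> ('e \<Rightarrow> real) \<Rightarrow> 'v set \<Rightarrow> 'v set \<Rightarrow> real" where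
  "S_net V E src tgt c bd A = Sup {flux E src tgt A v | v. is_flow V E src tgt c bd v}"

definition mutual_info ::
  "'v set \<Rightarrow> 'e set \<Rightarrow> ('e \<Rightarrow> 'v) \<Rightarrow> ('e \<Rightarrow> 'v) \<Rightarrow> ('e \<Rightarrow> real) \<Rightarrow> 'v set \<Rightarrow> 'v \<Rightarrow> 'v \<Rightarrow> real" where
  "mutual_info V E src tgt c bd a b =
     S_net V E src tgt c bd {a} + S_net V E src tgt c bd {b} - S_net V E src tgt c bd {a, b}"

definition pos_adj :: "'e set \<Rightarrow> ('e \<Rightarrow> 'v) \<Rightarrow> ('e \<Rightarrow> 'v) \<Rightarrow> ('e \<Rightarrow> real) \<Rightarrow> 'v \<Rightarrow> 'v \<Rightarrow> bool" where
  "pos_adj E src tgt c x y \<longleftrightarrow>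
     (\<exists>e\<in>E. 0 < c e \<and> ((src e = x \<and> tgt e = y) \<or> (src e = y \<and> tgt e = x)))"

definition pos_connected :: "'e set \<Rightarrow> ('e \<Rightarrow> 'v) \<Rightarrow> ('e \<Rightarrow> 'v) \<Rightarrow> ('e \<Rightarrow> real) \<Rightarrow> 'v \<Rightarrow> 'v \<Rightarrow> bool" where
  "pos_connected E src tgt c = (pos_adj E src tgt c)\<^sup>*\<^sup>*"

end

theory Submission
  imports Defs "HOL-Analysis.Analysis"
begin

definition dv :: "'e set \<Rightarrow> ('e \<Rightarrow> 'v) \<Rightarrow> ('e \<Rightarrow> 'v) \<Rightarrow> ('e \<Rightarrow> real) \<Rightarrow> 'v \<Rightarrow> real" where
  "dv E src tgt v x = (\<Sum>e\<in>{e\<in>E. src e = x}. v e) - (\<Sum>e\<in>{e\<in>E. tgt e = x}. v e)"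

definition gflow :: "'v set \<Rightarrow> 'e set \<Rightarrow> ('e \<Rightarrow> 'v) \<Rightarrow> ('e \<Rightarrow> 'v) \<Rightarrow> ('e \<Rightarrow> real) \<Rightarrow> ('e \<Rightarrow> real) \<Rightarrow> 'v set \<Rightarrow> ('e \<Rightarrow> real) \<Rightarrow> bool" where
  "gflow V E src tgt l u T v \<longleftrightarrow> (\<forall>e\<in>E. l e \<le> v e \<and> v e \<le> u e) \<and> (\<forall>x\<in>V - T. dv E src tgt v x = 0)"

lemma is_flow_gflow: "is_flow V E src tgt c T v \<longleftrightarrow> gflow V E src tgt (\<lambda>e. - c e) c T v"
  unfolding is_flow_def gflow_def dv_def by (auto simp: abs_le_iff)

lemma dv_as_sum: "finite E \<Longrightarrow> dv E src tgt v x = (\<Sum>e\<in>E. (of_bool (src e = x) - of_bool (tgt e = x)) * v e)"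
  unfolding dv_def by (auto simp: sum.inter_filter sum_subtractf[symmetric] intro!: sum.cong)

lemma flux_as_sum: "finite E \<Longrightarrow> flux E src tgt Y v = (\<Sum>e\<in>E. (of_bool (src e \<in> Y) - of_bool (tgt e \<in> Y)) * v e)"
proof -
  have "flux E src tgt Y v = (\<Sum>e\<in>{e\<in>E. src e \<in> Y}. v e) - (\<Sum>e\<in>{e\<in>E. tgt e \<in> Y}. v e)"
    unfolding flux_def by (simp add: sum_negf)
  also assume "finite E"
  then have "(\<Sum>e\<in>{e\<in>E. src e \<in> Y}. v e) - (\<Sum>e\<in>{e\<in>E. tgt e \<in> Y}. v e) = (\<Sum>e\<in>E. (of_bool (src e \<in> Y) - of_bool (tgt e \<in> Y)) * v e)"
    by (auto simp: sum.inter_filter sum_subtractf[symmetric] intro!: sum.cong)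
  finally show ?thesis .
qed

lemma flux_dv: assumes "finite E" "finite Y" shows "flux E src tgt Y v = (\<Sum>y\<in>Y. dv E src tgt v y)"
proof -
  have "(\<Sum>y\<in>Y. dv E src tgt v y) = (\<Sum>y\<in>Y. \<Sum>e\<in>E. (of_bool (src e = y) - of_bool (tgt e = y)) * v e)"
    using assms by (simp add: dv_as_sum)
  also have "\<dots> = (\<Sum>e\<in>E. \<Sum>y\<in>Y. (of_bool (src e = y) - of_bool (tgt e = y)) * v e)"
    by (rule sum.swap)
  also have "\<dots> = (\<Sum>e\<in>E. (of_bool (src e \<in> Y) - of_bool (tgt e \<in> Y)) * v e)"
  proof (rule sum.cong[OF refl])
    fix e
    have "(\<Sum>y\<in>Y. (of_bool (src e = y) - of_bool (tgt e = y)) * v e) =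
      (\<Sum>y\<in>Y. (if y = src e then v e else 0)) - (\<Sum>y\<in>Y. (if y = tgt e then v e else 0))"
      by (simp add: sum_subtractf[symmetric] of_bool_def; rule sum.cong; auto)
    also have "\<dots> = (of_bool (src e \<in> Y) - of_bool (tgt e \<in> Y)) * v e"
      using assms(2) by (simp add: sum.delta of_bool_def algebra_simps)
    finally show "(\<Sum>y\<in>Y. (of_bool (src e = y) - of_bool (tgt e = y)) * v e) = (of_bool (src e \<in> Y) - of_bool (tgt e \<in> Y)) * v e" .
  qed
  finally show ?thesis using assms by (simp add: flux_as_sum)
qed

lemma max_exists:
  assumes finE: "finite E" and lu: "\<forall>e\<in>E. l e \<le> 0 \<and> 0 \<le> u e"
  shows "\<exists>v. gflow V E src tgt l u T v \<and> (\<forall>v'. gflow V E src tgt l u T v' \<longrightarrow> (\<Sum>e\<in>E. a e * v' e) \<le> (\<Sum>e\<in>E. a e * v e))"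
proof -
  let ?X = "product_topology (\<lambda>_. euclideanreal) E"
  define K where "K = {v \<in> PiE E (\<lambda>e. {l e..u e}). \<forall>x\<in>V - T. dv E src tgt v x = 0}"
  have cK: "compactin ?X (PiE E (\<lambda>e. {l e..u e}))"
    by (simp add: compactin_PiE)
  have contdv: "continuous_map ?X euclideanreal (\<lambda>v. dv E src tgt v x)" for x
    unfolding dv_as_sum[OF finE]
    by (intro continuous_map_sum finE continuous_map_real_mult_left continuous_map_product_projection)
  have clK: "closedin ?X K"
  proof -
    have "K = (PiE E (\<lambda>e. {l e..u e})) \<inter> (\<Inter>x\<in>V - T. {v \<in> topspace ?X. dv E src tgt v x \<in> {0}})"
      unfolding K_def by (auto simp: PiE_def Pi_def)
    moreover have "closedin ?X (PiE E (\<lambda>e. {l e..u e}))"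
      by (intro compactin_imp_closedin) (auto simp: cK Hausdorff_space_product_topology)
    moreover have "closedin ?X {v \<in> topspace ?X. dv E src tgt v x \<in> {0}}" for x
      by (rule closedin_continuous_map_preimage[OF contdv]) simp
    ultimately show ?thesis
      by (cases "V - T = {}") auto
  qed
  have cK2: "compactin ?X K"
    by (rule closed_compactin[OF cK _ clK]) (auto simp: K_def)
  have ne: "restrict (\<lambda>_. 0) E \<in> K" using lu unfolding K_def dv_def by auto
  have "continuous_map ?X euclideanreal (\<lambda>v. \<Sum>e\<in>E. a e * v e)"
    by (intro continuous_map_sum finE continuous_map_real_mult_left continuous_map_product_projection)
  then have "compact ((\<lambda>v. \<Sum>e\<in>E. a e * v e) ` K)"
    using image_compactin[OF cK2, of euclideanreal] compactin_euclidean_iff by blast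
  then obtain m where m: "m \<in> (\<lambda>v. \<Sum>e\<in>E. a e * v e) ` K" "\<forall>y\<in>(\<lambda>v. \<Sum>e\<in>E. a e * v e) ` K. y \<le> m"
    using compact_attains_sup ne by blast
  then obtain v where v: "v \<in> K" "\<forall>w\<in>K. (\<Sum>e\<in>E. a e * w e) \<le> (\<Sum>e\<in>E. a e * v e)" by auto
  show ?thesis
  proof (intro exI conjI allI impI)
    show "gflow V E src tgt l u T v" using v(1) unfolding K_def gflow_def by auto
    fix v' assume g: "gflow V E src tgt l u T v'"
    have "restrict v' E \<in> K"
    proof -
      have "dv E src tgt (restrict v' E) x = dv E src tgt v' x" for x unfolding dv_def by simp
      then show ?thesis using g unfolding K_def gflow_def by auto
    qed
    then have "(\<Sum>e\<in>E. a e * restrict v' E e) \<le> (\<Sum>e\<in>E. a e * v e)" using v by blast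
    then show "(\<Sum>e\<in>E. a e * v' e) \<le> (\<Sum>e\<in>E. a e * v e)" by simp
  qed
qed

lemma finite_min_delta:
  assumes "finite E" "\<forall>e\<in>E. \<exists>\<delta>>0. \<forall>t. 0 < t \<and> t \<le> \<delta> \<longrightarrow> P e t"
  shows "\<exists>\<delta>>(0::real). \<forall>e\<in>E. \<forall>t. 0 < t \<and> t \<le> \<delta> \<longrightarrow> P e t"
  using assms
proof (induction E rule: finite_induct)
  case empty then show ?case by (intro exI[of _ 1]) auto
next
  case (insert x F)
  then obtain d1 where d1: "d1 > 0" "\<forall>e\<in>F. \<forall>t. 0 < t \<and> t \<le> d1 \<longrightarrow> P e t" by auto
  from insert obtain d2 where d2: "d2 > 0" "\<forall>t. 0 < t \<and> t \<le> d2 \<longrightarrow> P x t" by auto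
  show ?case using d1 d2 by (intro exI[of _ "min d1 d2"]) auto
qed

locale nw =
  fixes V :: "'v set" and E :: "'e set" and src tgt :: "'e \<Rightarrow> 'v"
  assumes finV: "finite V" and finE: "finite E" and ends: "\<forall>e\<in>E. src e \<in> V \<and> tgt e \<in> V"
begin

abbreviation "D \<equiv> dv E src tgt"
abbreviation "F \<equiv> flux E src tgt"

definition resid :: "('e \<Rightarrow> real) \<Rightarrow> ('e \<Rightarrow> real) \<Rightarrow> ('e \<Rightarrow> real) \<Rightarrow> 'v \<Rightarrow> 'v \<Rightarrow> bool" where
  "resid l u v x y \<longleftrightarrow> (\<exists>e\<in>E. (src e = x \<and> tgt e = y \<and> v e < u e) \<or> (tgt e = x \<and> src e = y \<and> l e < v e))"

lemma D_lin: "D (\<lambda>e. a * v e + b * w e) x = a * D v x + b * D w x"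
  unfolding dv_as_sum[OF finE] sum_distrib_left sum.distrib[symmetric] by (rule sum.cong) (auto simp: algebra_simps)

lemma D_zero: "D (\<lambda>e. 0) x = 0"
  unfolding dv_def by simp

lemma D_ind: "e \<in> E \<Longrightarrow> D (\<lambda>e'. if e' = e then 1 else 0) x = of_bool (src e = x) - of_bool (tgt e = x)"
  unfolding dv_as_sum[OF finE] by (simp add: if_distrib finE cong: if_cong)

lemma D_total: "(\<Sum>x\<in>V. D v x) = 0"
proof -
  have "(\<Sum>x\<in>V. D v x) = F V v" using flux_dv[OF finE finV] by simp
  also have "\<dots> = 0" unfolding flux_as_sum[OF finE] using ends by (intro sum.neutral) auto
  finally show ?thesis .
qed

lemma aug_d:
  assumes "(resid l u v)\<^sup>*\<^sup>* a b"
  shows "\<exists>d. (\<forall>x. D d x = of_bool (x = a) - of_bool (x = b)) \<and> (\<forall>e\<in>E. 0 < d e \<longrightarrow> v e < u e) \<and> (\<forall>e\<in>E. d e < 0 \<longrightarrow> l e < v e)"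
  using assms
proof (induction rule: rtranclp_induct)
  case base
  show ?case by (intro exI[of _ "\<lambda>_. 0"]) (simp add: D_zero)
next
  case (step y z)
  from step.IH obtain d where d: "\<forall>x. D d x = of_bool (x = a) - of_bool (x = y)"
    "\<forall>e\<in>E. 0 < d e \<longrightarrow> v e < u e" "\<forall>e\<in>E. d e < 0 \<longrightarrow> l e < v e" by blast
  from step.hyps(2) obtain e where e: "e \<in> E" "(src e = y \<and> tgt e = z \<and> v e < u e) \<or> (tgt e = y \<and> src e = z \<and> l e < v e)"
    unfolding resid_def by blast
  from e(2) show ?case
  proof
    assume h: "src e = y \<and> tgt e = z \<and> v e < u e"
    let ?d = "\<lambda>e'. 1 * d e' + 1 * (if e' = e then 1 else 0)"
    show ?thesis
    proof (intro exI[of _ ?d] conjI allI ballI impI)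
      fix x show "D ?d x = of_bool (x = a) - of_bool (x = z)"
        unfolding D_lin using d(1) D_ind[OF e(1)] h by simp
    next
      fix e' assume "e' \<in> E" "0 < ?d e'" then show "v e' < u e'" using d h by (cases "e' = e") auto
    next
      fix e' assume "e' \<in> E" "?d e' < 0" then show "l e' < v e'" using d h by (cases "e' = e") auto
    qed
  next
    assume h: "tgt e = y \<and> src e = z \<and> l e < v e"
    let ?d = "\<lambda>e'. 1 * d e' + (-1) * (if e' = e then 1 else 0)"
    show ?thesis
    proof (intro exI[of _ ?d] conjI allI ballI impI)
      fix x show "D ?d x = of_bool (x = a) - of_bool (x = z)"
        unfolding D_lin using d(1) D_ind[OF e(1)] h by simp
    next
      fix e' assume "e' \<in> E" "0 < ?d e'" then show "v e' < u e'" using d h by (cases "e' = e") auto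
    next
      fix e' assume "e' \<in> E" "?d e' < 0" then show "l e' < v e'" using d h by (cases "e' = e") auto
    qed
  qed
qed

lemma aug:
  assumes bnd: "\<forall>e\<in>E. l e \<le> v e \<and> v e \<le> u e" and r: "(resid l u v)\<^sup>*\<^sup>* a b"
  shows "\<exists>\<epsilon>>0. \<exists>d. (\<forall>x. D d x = of_bool (x = a) - of_bool (x = b)) \<and>
     (\<forall>e\<in>E. l e \<le> v e + \<epsilon> * d e \<and> v e + \<epsilon> * d e \<le> u e)"
proof -
  obtain d where d: "\<forall>x. D d x = of_bool (x = a) - of_bool (x = b)" "\<forall>e\<in>E. 0 < d e \<longrightarrow> v e < u e" "\<forall>e\<in>E. d e < 0 \<longrightarrow> l e < v e"
    using aug_d[OF r] by blast
  have "\<forall>e\<in>E. \<exists>\<delta>>0. \<forall>t. 0 < t \<and> t \<le> \<delta> \<longrightarrow> l e \<le> v e + t * d e \<and> v e + t * d e \<le> u e"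
  proof
    fix e assume e: "e \<in> E"
    consider "d e > 0" | "d e < 0" | "d e = 0" by linarith
    then show "\<exists>\<delta>>0. \<forall>t. 0 < t \<and> t \<le> \<delta> \<longrightarrow> l e \<le> v e + t * d e \<and> v e + t * d e \<le> u e"
    proof cases
      case 1
      then have "v e < u e" using d e by auto
      show ?thesis
      proof (intro exI[of _ "(u e - v e) / d e"] conjI allI impI)
        show "(u e - v e) / d e > 0" using 1 \<open>v e < u e\<close> by simp
        fix t assume t: "0 < t \<and> t \<le> (u e - v e) / d e"
        then have "t * d e \<le> u e - v e" using 1 by (simp add: le_divide_eq)
        then show "v e + t * d e \<le> u e" by simp
        have "0 < t * d e" using 1 t by simp
        then show "l e \<le> v e + t * d e" using bnd e by force
      qed
    next
      case 2
      then have "l e < v e" using d e by auto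
      show ?thesis
      proof (intro exI[of _ "(v e - l e) / (- d e)"] conjI allI impI)
        show "(v e - l e) / (- d e) > 0" using 2 \<open>l e < v e\<close> by (intro divide_pos_pos) auto
        fix t assume t: "0 < t \<and> t \<le> (v e - l e) / (- d e)"
        then have "t * (- d e) \<le> (v e - l e) / (- d e) * (- d e)" using 2 by (intro mult_right_mono) auto
        also have "\<dots> = v e - l e" using 2 by simp
        finally have "t * (- d e) \<le> v e - l e" .
        then show "l e \<le> v e + t * d e" by simp
        have "t * d e < 0" using 2 t by (simp add: mult_pos_neg)
        then show "v e + t * d e \<le> u e" using bnd e by force
      qed
    next
      case 3 then show ?thesis using bnd e by (intro exI[of _ 1]) auto
    qed
  qed
  from finite_min_delta[OF finE this] obtain \<delta> where "\<delta> > 0"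
    "\<forall>e\<in>E. \<forall>t. 0 < t \<and> t \<le> \<delta> \<longrightarrow> l e \<le> v e + t * d e \<and> v e + t * d e \<le> u e" by blast
  then show ?thesis using d(1) by (intro exI[of _ \<delta>] conjI exI[of _ d]) auto
qed

lemma reach_in: "(resid l u v)\<^sup>*\<^sup>* a b \<Longrightarrow> b = a \<or> b \<in> V"
  by (induction rule: rtranclp_induct) (auto simp: resid_def dest: ends[rule_format])

lemma cut:
  assumes bnd: "\<forall>e\<in>E. l e \<le> v e \<and> v e \<le> u e" and bnd': "\<forall>e\<in>E. l e \<le> v' e \<and> v' e \<le> u e"
    and W: "W = {y. \<exists>x\<in>X. (resid l u v)\<^sup>*\<^sup>* x y}"
  shows "F W v' \<le> F W v"
  unfolding flux_as_sum[OF finE]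
proof (rule sum_mono)
  fix e assume e: "e \<in> E"
  have A: "tgt e \<in> W" if "src e \<in> W" "v e < u e"
  proof -
    from that(1) W obtain x where "x \<in> X" "(resid l u v)\<^sup>*\<^sup>* x (src e)" by auto
    moreover have "resid l u v (src e) (tgt e)" using e that(2) unfolding resid_def by blast
    ultimately show ?thesis using W by (auto intro: rtranclp.rtrancl_into_rtrancl)
  qed
  have B: "src e \<in> W" if "tgt e \<in> W" "l e < v e"
  proof -
    from that(1) W obtain x where "x \<in> X" "(resid l u v)\<^sup>*\<^sup>* x (tgt e)" by auto
    moreover have "resid l u v (tgt e) (src e)" using e that(2) unfolding resid_def by blast
    ultimately show ?thesis using W by (auto intro: rtranclp.rtrancl_into_rtrancl)
  qed
  show "(of_bool (src e \<in> W) - of_bool (tgt e \<in> W)) * v' e \<le> (of_bool (src e \<in> W) - of_bool (tgt e \<in> W)) * v e"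
  proof -
    have A': "u e \<le> v e" if "src e \<in> W" "tgt e \<notin> W" using A that by force
    have B': "v e \<le> l e" if "tgt e \<in> W" "src e \<notin> W" using B that by force
    show ?thesis
      using A' B' bnd[rule_format, OF e] bnd'[rule_format, OF e] by (cases "src e \<in> W"; cases "tgt e \<in> W") auto
  qed
qed


lemma D_add: "D (\<lambda>e. v e + w e) x = D v x + D w x"
  unfolding dv_def by (simp add: sum.distrib)
lemma D_diff: "D (\<lambda>e. v e - w e) x = D v x - D w x"
  unfolding dv_def by (simp add: sum_subtractf)
lemma D_neg: "D (\<lambda>e. - v e) x = - D v x"
  unfolding dv_def by (simp add: sum_negf)
lemma D_scale: "D (\<lambda>e. a * v e) x = a * D v x"
  unfolding dv_def by (simp add: sum_distrib_left right_diff_distrib)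
lemma F1: "F {x} v = D v x"
  using flux_dv[OF finE, of "{x}"] by simp
lemma F2: "x \<noteq> y \<Longrightarrow> F {x, y} v = D v x + D v y"
  using flux_dv[OF finE, of "{x,y}"] by simp

lemma flow_D0: "is_flow V E src tgt c T v \<Longrightarrow> x \<in> V - T \<Longrightarrow> D v x = 0"
  unfolding is_flow_gflow gflow_def by auto
lemma flow_bnd: "is_flow V E src tgt c T v \<Longrightarrow> e \<in> E \<Longrightarrow> \<bar>v e\<bar> \<le> c e"
  unfolding is_flow_def by auto
lemma flow_intro: "(\<forall>e\<in>E. \<bar>v e\<bar> \<le> c e) \<Longrightarrow> (\<forall>x\<in>V - T. D v x = 0) \<Longrightarrow> is_flow V E src tgt c T v"
  unfolding is_flow_gflow gflow_def by (auto simp: abs_le_iff)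
lemma flow_neg: "is_flow V E src tgt c T v \<Longrightarrow> is_flow V E src tgt c T (\<lambda>e. - v e)"
  by (intro flow_intro) (auto simp: D_neg flow_D0 flow_bnd)

lemma D_T:
  assumes "is_flow V E src tgt c T v" "T = {a, b, d}" "a \<noteq> b" "a \<noteq> d" "b \<noteq> d" "T \<subseteq> V"
  shows "D v a + D v b + D v d = 0"
proof -
  have "(\<Sum>x\<in>T. D v x) = (\<Sum>x\<in>V. D v x)"
    using assms(1,6) finV by (intro sum.mono_neutral_left) (auto simp: flow_D0)
  then show ?thesis using D_total assms(2-5) by simp
qed

lemma S_char:
  assumes "is_flow V E src tgt c T v" "\<forall>v'. is_flow V E src tgt c T v' \<longrightarrow> F Y v' \<le> F Y v"
  shows "S_net V E src tgt c T Y = F Y v"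
  unfolding S_net_def using assms by (intro cSup_eq_maximum) auto

definition co :: "'v \<Rightarrow> 'e \<Rightarrow> real" where "co x e = of_bool (src e = x) - of_bool (tgt e = x)"
definition coS :: "'v set \<Rightarrow> 'e \<Rightarrow> real" where "coS Y e = of_bool (src e \<in> Y) - of_bool (tgt e \<in> Y)"

lemma D_co: "D v x = (\<Sum>e\<in>E. co x e * v e)"
  unfolding co_def by (rule dv_as_sum[OF finE])
lemma F_co: "F Y v = (\<Sum>e\<in>E. coS Y e * v e)"
  unfolding coS_def by (rule flux_as_sum[OF finE])

lemma S_max:
  assumes "\<forall>e\<in>E. 0 \<le> c e"
  shows "\<exists>v. is_flow V E src tgt c T v \<and> (\<forall>v'. is_flow V E src tgt c T v' \<longrightarrow> F Y v' \<le> F Y v)"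
  using max_exists[OF finE, of "\<lambda>e. - c e" c V src tgt T "coS Y"] assms
  unfolding is_flow_gflow F_co by auto

lemma S_upper:
  assumes "\<forall>e\<in>E. 0 \<le> c e" "is_flow V E src tgt c T v"
  shows "F Y v \<le> S_net V E src tgt c T Y"
proof -
  obtain w where "is_flow V E src tgt c T w" "\<forall>v'. is_flow V E src tgt c T v' \<longrightarrow> F Y v' \<le> F Y w"
    using S_max[OF assms(1)] by blast
  then show ?thesis using S_char assms(2) by metis
qed

lemma aug_flow:
  assumes g: "is_flow V E src tgt c T g" and r: "(resid (\<lambda>e. - c e) c g)\<^sup>*\<^sup>* a b" and ab: "a \<in> T" "b \<in> T"
  shows "\<exists>\<epsilon>>0. \<exists>g'. is_flow V E src tgt c T g' \<and> (\<forall>x. D g' x = D g x + \<epsilon> * (of_bool (x = a) - of_bool (x = b)))"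
proof -
  have bnd: "\<forall>e\<in>E. - c e \<le> g e \<and> g e \<le> c e" using g unfolding is_flow_def by (auto simp: abs_le_iff)
  obtain \<epsilon> d where ed: "\<epsilon> > 0" "\<forall>x. D d x = of_bool (x = a) - of_bool (x = b)"
    "\<forall>e\<in>E. - c e \<le> g e + \<epsilon> * d e \<and> g e + \<epsilon> * d e \<le> c e"
    using aug[OF bnd r] by blast
  let ?g = "\<lambda>e. g e + \<epsilon> * d e"
  have Dg: "D ?g x = D g x + \<epsilon> * (of_bool (x = a) - of_bool (x = b))" for x
    using ed(2) by (simp add: D_add D_scale)
  have "is_flow V E src tgt c T ?g"
    using ed(3) Dg ab flow_D0[OF g] by (intro flow_intro) (auto simp: abs_le_iff)
  then show ?thesis using ed(1) Dg by blast
qed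

lemma F_reach:
  assumes "finite X" "X \<subseteq> W" "W \<subseteq> X \<union> V" "\<forall>x\<in>W - X. D v x = 0"
  shows "F W v = (\<Sum>x\<in>X. D v x)"
proof -
  have fW: "finite W" using assms(1,3) finV finite_subset by blast
  have "F W v = (\<Sum>x\<in>W. D v x)" by (rule flux_dv[OF finE fW])
  also have "\<dots> = (\<Sum>x\<in>X. D v x)" using assms fW by (intro sum.mono_neutral_right) auto
  finally show ?thesis .
qed


lemma maxpair:
  assumes cn: "\<forall>e\<in>E. 0 \<le> c e" and T: "T = {a, b, d}" and dist: "a \<noteq> b" "a \<noteq> d" "b \<noteq> d" and TV: "T \<subseteq> V"
  shows "\<exists>g. is_flow V E src tgt c T g \<and> D g a = S_net V E src tgt c T {a} \<and> D g d = - S_net V E src tgt c T {d}"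
proof -
  obtain g where g: "is_flow V E src tgt c T g"
    and gmax: "\<forall>v'. is_flow V E src tgt c T v' \<longrightarrow> D v' a - D v' d \<le> D g a - D g d"
  proof -
    from max_exists[OF finE, of "\<lambda>e. - c e" c V src tgt T "\<lambda>e. co a e - co d e"] cn
    obtain g where "is_flow V E src tgt c T g"
      "\<forall>v'. is_flow V E src tgt c T v' \<longrightarrow> (\<Sum>e\<in>E. (co a e - co d e) * v' e) \<le> (\<Sum>e\<in>E. (co a e - co d e) * g e)"
      unfolding is_flow_gflow by auto
    moreover have "(\<Sum>e\<in>E. (co a e - co d e) * v e) = D v a - D v d" for v
      unfolding D_co by (simp add: left_diff_distrib sum_subtractf)
    ultimately show ?thesis using that by auto
  qed
  let ?R = "resid (\<lambda>e. - c e) c g"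
  have aT: "a \<in> T" "b \<in> T" "d \<in> T" using T by auto
  have n1: "\<not> ?R\<^sup>*\<^sup>* a d"
  proof
    assume "?R\<^sup>*\<^sup>* a d"
    from aug_flow[OF g this aT(1,3)] obtain \<epsilon> g' where "\<epsilon> > 0" "is_flow V E src tgt c T g'"
      "\<forall>x. D g' x = D g x + \<epsilon> * (of_bool (x = a) - of_bool (x = d))" by blast
    then show False using gmax dist by force
  qed
  have n2: "\<not> ?R\<^sup>*\<^sup>* a b"
  proof
    assume "?R\<^sup>*\<^sup>* a b"
    from aug_flow[OF g this aT(1,2)] obtain \<epsilon> g' where "\<epsilon> > 0" "is_flow V E src tgt c T g'"
      "\<forall>x. D g' x = D g x + \<epsilon> * (of_bool (x = a) - of_bool (x = b))" by blast
    then show False using gmax dist by force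
  qed
  have n3: "\<not> ?R\<^sup>*\<^sup>* b d"
  proof
    assume "?R\<^sup>*\<^sup>* b d"
    from aug_flow[OF g this aT(2,3)] obtain \<epsilon> g' where "\<epsilon> > 0" "is_flow V E src tgt c T g'"
      "\<forall>x. D g' x = D g x + \<epsilon> * (of_bool (x = b) - of_bool (x = d))" by blast
    then show False using gmax dist by force
  qed
  have gb: "\<forall>e\<in>E. - c e \<le> g e \<and> g e \<le> c e" using g unfolding is_flow_def by (auto simp: abs_le_iff)
  have fb: "\<forall>e\<in>E. - c e \<le> v e \<and> v e \<le> c e" if "is_flow V E src tgt c T v" for v
    using that unfolding is_flow_def by (auto simp: abs_le_iff)
  define W1 where "W1 = {y. \<exists>x\<in>{a}. ?R\<^sup>*\<^sup>* x y}"
  have W1: "{a} \<subseteq> W1" "W1 \<subseteq> {a} \<union> V" "W1 - {a} \<subseteq> V - T"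
    using reach_in n1 n2 T unfolding W1_def by fastforce+
  have FW1: "F W1 v = D v a" if "is_flow V E src tgt c T v" for v
    using F_reach[of "{a}" W1 v] W1 flow_D0[OF that] by auto
  have m1: "D v a \<le> D g a" if "is_flow V E src tgt c T v" for v
    using cut[OF gb fb[OF that] W1_def] FW1[OF that] FW1[OF g] by simp
  have S1: "S_net V E src tgt c T {a} = D g a"
    using S_char[OF g] m1 by (simp add: F1)
  define W2 where "W2 = {y. \<exists>x\<in>{a,b}. ?R\<^sup>*\<^sup>* x y}"
  have W2: "{a,b} \<subseteq> W2" "W2 \<subseteq> {a,b} \<union> V" "W2 - {a,b} \<subseteq> V - T"
    using reach_in n1 n3 T unfolding W2_def by fastforce+
  have FW2: "F W2 v = D v a + D v b" if "is_flow V E src tgt c T v" for v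
    using F_reach[of "{a,b}" W2 v] W2 flow_D0[OF that] dist by auto
  have m2: "D v a + D v b \<le> D g a + D g b" if "is_flow V E src tgt c T v" for v
    using cut[OF gb fb[OF that] W2_def] FW2[OF that] FW2[OF g] by simp
  have m3: "D v d \<le> - D g d" if "is_flow V E src tgt c T v" for v
  proof -
    have "is_flow V E src tgt c T (\<lambda>e. - v e)" by (rule flow_neg[OF that])
    from m2[OF this] D_T[OF this T dist TV] D_T[OF g T dist TV] show ?thesis by (simp add: D_neg)
  qed
  have S3: "S_net V E src tgt c T {d} = - D g d"
    using S_char[OF flow_neg[OF g], of "{d}"] m3 by (simp add: F1 D_neg)
  show ?thesis using g S1 S3 by auto
qed

lemma S_pair:
  assumes cn: "\<forall>e\<in>E. 0 \<le> c e" and T: "T = {a, b, d}" and dist: "a \<noteq> b" "a \<noteq> d" "b \<noteq> d" and TV: "T \<subseteq> V"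
  shows "S_net V E src tgt c T {a, b} = S_net V E src tgt c T {d}"
proof -
  obtain v where v: "is_flow V E src tgt c T v" "\<forall>v'. is_flow V E src tgt c T v' \<longrightarrow> F {d} v' \<le> F {d} v"
    using S_max[OF cn] by blast
  have Sd: "S_net V E src tgt c T {d} = D v d" using S_char[OF v] by (simp add: F1)
  have "S_net V E src tgt c T {a, b} = F {a, b} (\<lambda>e. - v e)"
  proof (rule S_char[OF flow_neg[OF v(1)]], intro allI impI)
    fix v' assume h: "is_flow V E src tgt c T v'"
    have "F {d} (\<lambda>e. - v' e) \<le> F {d} v" using v(2) flow_neg[OF h] by blast
    then show "F {a, b} v' \<le> F {a, b} (\<lambda>e. - v e)"
      using D_T[OF h T dist TV] D_T[OF v(1) T dist TV] dist by (simp add: F1 F2 D_neg)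
  qed
  also have "\<dots> = D v d" using D_T[OF v(1) T dist TV] dist by (simp add: F2 D_neg)
  finally show ?thesis using Sd by simp
qed

lemma conf:
  assumes T: "T = {a, b, d}" and dist: "a \<noteq> b" "a \<noteq> d" "b \<noteq> d" and TV: "T \<subseteq> V"
    and w: "\<forall>x\<in>V - T. D w x = 0"
  shows "\<exists>z. (\<forall>e\<in>E. min 0 (w e) \<le> z e \<and> z e \<le> max 0 (w e)) \<and> (\<forall>x\<in>V - {a, b}. D z x = 0)
     \<and> min (D w a) (D w a + D w d) \<le> D z a"
proof -
  let ?l = "\<lambda>e. min 0 (w e)" and ?u = "\<lambda>e. max 0 (w e)"
  obtain z where z: "gflow V E src tgt ?l ?u {a, b} z"
    and zmax: "\<forall>v'. gflow V E src tgt ?l ?u {a, b} v' \<longrightarrow> D v' a \<le> D z a"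
    using max_exists[OF finE, of ?l ?u V src tgt "{a,b}" "co a"] unfolding D_co by auto
  have zb: "\<forall>e\<in>E. ?l e \<le> z e \<and> z e \<le> ?u e" using z unfolding gflow_def by auto
  have z0: "\<forall>x\<in>V - {a,b}. D z x = 0" using z unfolding gflow_def by auto
  let ?R = "resid ?l ?u z"
  have n: "\<not> ?R\<^sup>*\<^sup>* a b"
  proof
    assume "?R\<^sup>*\<^sup>* a b"
    from aug[OF zb this] obtain \<epsilon> dd where ed: "\<epsilon> > 0" "\<forall>x. D dd x = of_bool (x = a) - of_bool (x = b)"
      "\<forall>e\<in>E. ?l e \<le> z e + \<epsilon> * dd e \<and> z e + \<epsilon> * dd e \<le> ?u e" by blast
    let ?z = "\<lambda>e. z e + \<epsilon> * dd e"
    have Dz: "D ?z x = D z x + \<epsilon> * (of_bool (x = a) - of_bool (x = b))" for x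
      using ed(2) by (simp add: D_add D_scale)
    have "gflow V E src tgt ?l ?u {a, b} ?z"
      unfolding gflow_def using ed(3) Dz z0 by auto
    then have "D ?z a \<le> D z a" using zmax by blast
    then show False using Dz[of a] ed(1) dist by simp
  qed
  define W where "W = {y. \<exists>x\<in>{a}. ?R\<^sup>*\<^sup>* x y}"
  have Wp: "{a} \<subseteq> W" "W \<subseteq> {a} \<union> V" "b \<notin> W"
    using reach_in n unfolding W_def by fastforce+
  have FWz: "F W z = D z a"
    using F_reach[of "{a}" W z] Wp z0 by auto
  have wb: "\<forall>e\<in>E. ?l e \<le> w e \<and> w e \<le> ?u e" by auto
  have c1: "F W w \<le> F W z" by (rule cut[OF zb wb W_def])
  have "min (D w a) (D w a + D w d) \<le> F W w"
  proof (cases "d \<in> W")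
    case True
    have "F W w = (\<Sum>x\<in>{a,d}. D w x)"
      using Wp True T w by (intro F_reach) auto
    then show ?thesis using dist by simp
  next
    case False
    have "F W w = (\<Sum>x\<in>{a}. D w x)"
      using Wp False T w by (intro F_reach) auto
    then show ?thesis by simp
  qed
  then show ?thesis using c1 FWz zb z0 by auto
qed


lemma superadd:
  assumes k: "\<forall>e\<in>E. 0 \<le> k1 e \<and> 0 \<le> k2 e \<and> 0 \<le> k3 e" and ks: "\<forall>e\<in>E. k1 e + k2 e + k3 e = c e"
  shows "S_net V E src tgt k1 T Y + S_net V E src tgt k2 T Y + S_net V E src tgt k3 T Y \<le> S_net V E src tgt c T Y"
proof -
  obtain v1 where v1: "is_flow V E src tgt k1 T v1" "\<forall>v'. is_flow V E src tgt k1 T v' \<longrightarrow> F Y v' \<le> F Y v1"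
    using S_max k by blast
  obtain v2 where v2: "is_flow V E src tgt k2 T v2" "\<forall>v'. is_flow V E src tgt k2 T v' \<longrightarrow> F Y v' \<le> F Y v2"
    using S_max k by blast
  obtain v3 where v3: "is_flow V E src tgt k3 T v3" "\<forall>v'. is_flow V E src tgt k3 T v' \<longrightarrow> F Y v' \<le> F Y v3"
    using S_max k by blast
  let ?v = "\<lambda>e. v1 e + v2 e + v3 e"
  have "is_flow V E src tgt c T ?v"
  proof (intro flow_intro ballI)
    fix e assume e: "e \<in> E"
    have "\<bar>?v e\<bar> \<le> \<bar>v1 e\<bar> + \<bar>v2 e\<bar> + \<bar>v3 e\<bar>" by linarith
    also have "\<dots> \<le> c e" using flow_bnd[OF v1(1) e] flow_bnd[OF v2(1) e] flow_bnd[OF v3(1) e] ks e by auto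
    finally show "\<bar>?v e\<bar> \<le> c e" .
  next
    fix x assume "x \<in> V - T"
    then show "D ?v x = 0" using flow_D0[OF v1(1)] flow_D0[OF v2(1)] flow_D0[OF v3(1)]
      by (simp add: D_add[of "\<lambda>e. v1 e + v2 e"] D_add)
  qed
  moreover have "\<forall>e\<in>E. 0 \<le> c e" using k ks by force
  ultimately have "F Y ?v \<le> S_net V E src tgt c T Y" using S_upper by blast
  moreover have "F Y ?v = F Y v1 + F Y v2 + F Y v3"
    unfolding F_co by (simp add: distrib_left sum.distrib)
  moreover have "S_net V E src tgt k1 T Y = F Y v1" "S_net V E src tgt k2 T Y = F Y v2" "S_net V E src tgt k3 T Y = F Y v3"
    using S_char v1 v2 v3 by auto
  ultimately show ?thesis by simp
qed

lemma noconn: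
  assumes k: "\<forall>e\<in>E. 0 \<le> k e" and rT: "r \<in> T" "y \<in> T" "y \<noteq> r" and S0: "S_net V E src tgt k T {r} = 0"
    and pc: "pos_connected E src tgt k r y \<or> pos_connected E src tgt k y r"
  shows False
proof -
  let ?R = "resid (\<lambda>e. - k e) k (\<lambda>_. 0)"
  have sym: "pos_adj E src tgt k x z \<Longrightarrow> pos_adj E src tgt k z x" for x z
    unfolding pos_adj_def by blast
  have sub: "pos_adj E src tgt k x z \<Longrightarrow> ?R x z" for x z
    unfolding pos_adj_def resid_def by force
  have "(pos_adj E src tgt k)\<^sup>*\<^sup>* r y"
  proof -
    { assume "(pos_adj E src tgt k)\<^sup>*\<^sup>* y r"
      then have "(pos_adj E src tgt k)\<inverse>\<inverse>\<^sup>*\<^sup>* r y" by (rule rtranclp_converseI)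
      then have "(pos_adj E src tgt k)\<^sup>*\<^sup>* r y"
        by (rule mono_rtranclp[rule_format, rotated]) (auto intro: sym) }
    then show ?thesis using pc unfolding pos_connected_def by blast
  qed
  then have "?R\<^sup>*\<^sup>* r y" by (rule mono_rtranclp[rule_format, rotated]) (auto intro: sub)
  moreover have z: "is_flow V E src tgt k T (\<lambda>_. 0)" using k by (intro flow_intro) (auto simp: D_zero)
  ultimately obtain \<epsilon> g' where "\<epsilon> > 0" "is_flow V E src tgt k T g'"
    "\<forall>x. D g' x = D (\<lambda>_. 0) x + \<epsilon> * (of_bool (x = r) - of_bool (x = y))"
    using aug_flow[OF z _ rT(1,2)] by blast
  moreover have "F {r} g' \<le> S_net V E src tgt k T {r}" using S_upper k \<open>is_flow V E src tgt k T g'\<close> by blast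
  ultimately show False using S0 rT(3) by (simp add: F1 D_zero)
qed

lemma pairprops:
  assumes k: "\<forall>e\<in>E. 0 \<le> k e" and T: "T = {a, b, d}" and dist: "a \<noteq> b" "a \<noteq> d" "b \<noteq> d" and TV: "T \<subseteq> V"
    and Sa: "S_net V E src tgt k T {a} = M / 2" and Sb: "S_net V E src tgt k T {b} = M / 2"
    and Sd: "S_net V E src tgt k T {d} = 0"
  shows "mutual_info V E src tgt k T a b = M \<and>
    (\<forall>x\<in>T. \<forall>y\<in>T. x \<noteq> y \<and> pos_connected E src tgt k x y \<longrightarrow> {x, y} = {a, b})"
proof
  show "mutual_info V E src tgt k T a b = M"
    unfolding mutual_info_def using S_pair[OF k T dist TV] Sa Sb Sd by simp
  show "\<forall>x\<in>T. \<forall>y\<in>T. x \<noteq> y \<and> pos_connected E src tgt k x y \<longrightarrow> {x, y} = {a, b}"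
  proof (intro ballI impI)
    fix x y assume xy: "x \<in> T" "y \<in> T" "x \<noteq> y \<and> pos_connected E src tgt k x y"
    have "x \<noteq> d" using noconn[OF k _ xy(2) _ Sd] xy T by auto
    moreover have "y \<noteq> d" using noconn[OF k _ xy(1) _ Sd] xy T by auto
    ultimately show "{x, y} = {a, b}" using xy T by auto
  qed
qed


lemma conf_abs:
  fixes W Z t :: real
  assumes "min 0 W \<le> Z" "Z \<le> max 0 W" "0 \<le> t" "t \<le> 1"
  shows "\<bar>t * Z\<bar> + \<bar>W - t * Z\<bar> = \<bar>W\<bar>"
proof (cases "W \<ge> 0")
  case True
  then have "0 \<le> Z" "Z \<le> W" using assms by auto
  then have "0 \<le> t * Z" "t * Z \<le> Z" using assms by (auto simp: mult_left_le_one_le)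
  then show ?thesis using \<open>Z \<le> W\<close> by auto
next
  case False
  then have "Z \<le> 0" "W \<le> Z" using assms by auto
  have "t * Z \<le> 0" using assms \<open>Z \<le> 0\<close> by (simp add: mult_nonneg_nonpos)
  moreover have "(1 - t) * Z \<le> 0" using assms \<open>Z \<le> 0\<close> by (simp add: mult_nonneg_nonpos)
  then have "Z \<le> t * Z" by (simp add: algebra_simps)
  ultimately show ?thesis using \<open>W \<le> Z\<close> by auto
qed

lemma half_abs:
  fixes a b C :: real
  assumes "\<bar>a\<bar> \<le> C" "\<bar>b\<bar> \<le> C"
  shows "\<bar>1 / 2 * (a + b)\<bar> + \<bar>1 / 2 * (a - b)\<bar> \<le> C"
  using assms
  apply (cases "a < 0"; cases "b < 0"; cases "a + b < 0"; cases "a < b")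
  apply (auto simp: abs_if field_simps)
  done

lemma S_nonneg: assumes "\<forall>e\<in>E. 0 \<le> k e" shows "0 \<le> S_net V E src tgt k T {x}"
proof -
  have "is_flow V E src tgt k T (\<lambda>_. 0)" using assms by (intro flow_intro) (auto simp: D_zero)
  from S_upper[OF assms this, of "{x}"] show ?thesis by (simp add: F1 D_zero)
qed

lemma decomp:
  assumes cn: "\<forall>e\<in>E. 0 \<le> c e" and T: "T = {p, q, r}" and dist: "p \<noteq> q" "p \<noteq> r" "q \<noteq> r" and TV: "T \<subseteq> V"
  shows "\<exists>k12 k13 k23. (\<forall>e\<in>E. 0 \<le> k12 e \<and> 0 \<le> k13 e \<and> 0 \<le> k23 e) \<and> (\<forall>e\<in>E. k12 e + k13 e + k23 e = c e) \<and>
    S_net V E src tgt k12 T {p} = mutual_info V E src tgt c T p q / 2 \<and>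
    S_net V E src tgt k12 T {q} = mutual_info V E src tgt c T p q / 2 \<and>
    S_net V E src tgt k12 T {r} = 0 \<and>
    S_net V E src tgt k13 T {p} = mutual_info V E src tgt c T p r / 2 \<and>
    S_net V E src tgt k13 T {r} = mutual_info V E src tgt c T p r / 2 \<and>
    S_net V E src tgt k13 T {q} = 0 \<and>
    S_net V E src tgt k23 T {q} = mutual_info V E src tgt c T q r / 2 \<and>
    S_net V E src tgt k23 T {r} = mutual_info V E src tgt c T q r / 2 \<and>
    S_net V E src tgt k23 T {p} = 0 \<and>
    S_net V E src tgt k12 T {p} + S_net V E src tgt k13 T {p} + S_net V E src tgt k23 T {p} = S_net V E src tgt c T {p} \<and>
    S_net V E src tgt k12 T {q} + S_net V E src tgt k13 T {q} + S_net V E src tgt k23 T {q} = S_net V E src tgt c T {q} \<and>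
    S_net V E src tgt k12 T {r} + S_net V E src tgt k13 T {r} + S_net V E src tgt k23 T {r} = S_net V E src tgt c T {r}"
proof -
  define Sp where "Sp = S_net V E src tgt c T {p}"
  define Sq where "Sq = S_net V E src tgt c T {q}"
  define Sr where "Sr = S_net V E src tgt c T {r}"
  have T2: "T = {p, r, q}" and T3: "T = {q, r, p}" using T by auto
  have Ipq: "mutual_info V E src tgt c T p q = Sp + Sq - Sr"
    unfolding mutual_info_def Sp_def Sq_def Sr_def using S_pair[OF cn T dist TV] by simp
  have Ipr: "mutual_info V E src tgt c T p r = Sp + Sr - Sq"
    unfolding mutual_info_def Sp_def Sq_def Sr_def using S_pair[OF cn T2 dist(2,1) dist(3)[symmetric] TV] by simp
  have Iqr: "mutual_info V E src tgt c T q r = Sq + Sr - Sp"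
    unfolding mutual_info_def Sp_def Sq_def Sr_def using S_pair[OF cn T3 dist(3) dist(1,2)[symmetric] TV] by simp
  obtain g where g: "is_flow V E src tgt c T g" "D g p = Sp" "D g r = - Sr"
    using maxpair[OF cn T dist TV] unfolding Sp_def Sr_def by blast
  obtain h where h: "is_flow V E src tgt c T h" "D h p = Sp" "D h q = - Sq"
    using maxpair[OF cn T2 dist(2,1) dist(3)[symmetric] TV] unfolding Sp_def Sq_def by blast
  have gq: "D g q = Sr - Sp" using D_T[OF g(1) T dist TV] g by simp
  have hr: "D h r = Sq - Sp" using D_T[OF h(1) T dist TV] h by simp
  have "D g q \<le> Sq" using S_upper[OF cn g(1), of "{q}"] unfolding Sq_def by (simp add: F1)
  then have I1: "Sp + Sq - Sr \<ge> 0" using gq by simp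
  have "D h r \<le> Sr" using S_upper[OF cn h(1), of "{r}"] unfolding Sr_def by (simp add: F1)
  then have I2: "Sp + Sr - Sq \<ge> 0" using hr by simp
  have "D (\<lambda>e. - g e) q \<le> Sq" using S_upper[OF cn flow_neg[OF g(1)], of "{q}"] unfolding Sq_def by (simp add: F1)
  then have I3: "Sq + Sr - Sp \<ge> 0" using gq by (simp add: D_neg)
  define w where "w = (\<lambda>e. (1/2) * (g e + h e))"
  define y where "y = (\<lambda>e. (1/2) * (g e - h e))"
  have Dw: "D w x = (D g x + D h x) / 2" for x unfolding w_def D_scale D_add by simp
  have Dy: "D y x = (D g x - D h x) / 2" for x unfolding y_def D_scale D_diff by simp
  have w0: "\<forall>x\<in>V - T. D w x = 0" by (simp add: Dw flow_D0[OF g(1)] flow_D0[OF h(1)])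
  have y0: "\<forall>x\<in>V - T. D y x = 0" by (simp add: Dy flow_D0[OF g(1)] flow_D0[OF h(1)])
  obtain z where zb: "\<forall>e\<in>E. min 0 (w e) \<le> z e \<and> z e \<le> max 0 (w e)" and z0: "\<forall>x\<in>V - {p, q}. D z x = 0"
    and zm: "min (D w p) (D w p + D w r) \<le> D z p"
    using conf[OF T dist TV w0] by blast
  define H where "H = (Sp + Sq - Sr) / 2"
  define m where "m = D z p"
  have Dwp: "D w p = Sp" using Dw[of p] g h by simp
  have Dwr: "D w r = (Sq - Sp - Sr)/2" using Dw[of r] g hr by simp
  have e1: "D w p + D w r = H" unfolding Dwp Dwr H_def by (simp add: field_simps)
  have e2: "H \<le> D w p" using I2 unfolding Dwp H_def by simp
  have "min (D w p) (D w p + D w r) = H" using e1 e2 by simp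
  then have Hm: "0 \<le> H" "H \<le> m" using zm I1 unfolding m_def by (simp_all add: H_def)
  have zq: "D z q = - m"
  proof -
    have "(\<Sum>x\<in>V. D z x) = (\<Sum>x\<in>{p,q}. D z x)"
      using finV TV T z0 by (intro sum.mono_neutral_right) auto
    then show ?thesis using D_total dist unfolding m_def by simp
  qed
  have zr: "D z r = 0" using z0 TV T dist by auto
  define t where "t = (if m = 0 then 0 else H / m)"
  have t: "0 \<le> t" "t \<le> 1" "t * m = H" using Hm unfolding t_def by auto
  define w12 where "w12 = (\<lambda>e. t * z e)"
  define w13 where "w13 = (\<lambda>e. w e - w12 e)"
  have Dw12: "D w12 x = t * D z x" for x unfolding w12_def D_scale by simp
  have Dw13: "D w13 x = D w x - D w12 x" for x unfolding w13_def D_diff by simp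
  have absw: "\<bar>w12 e\<bar> + \<bar>w13 e\<bar> = \<bar>w e\<bar>" if "e \<in> E" for e
    unfolding w13_def w12_def using conf_abs zb that t by auto
  have absc: "\<bar>w e\<bar> + \<bar>y e\<bar> \<le> c e" if "e \<in> E" for e
    using flow_bnd[OF g(1) that] flow_bnd[OF h(1) that] unfolding w_def y_def by (rule half_abs)
  define k12 where "k12 = (\<lambda>e. \<bar>w12 e\<bar> + (c e - (\<bar>w e\<bar> + \<bar>y e\<bar>)))"
  define k13 where "k13 = (\<lambda>e. \<bar>w13 e\<bar>)"
  define k23 where "k23 = (\<lambda>e. \<bar>y e\<bar>)"
  have knn: "\<forall>e\<in>E. 0 \<le> k12 e \<and> 0 \<le> k13 e \<and> 0 \<le> k23 e"
    unfolding k12_def k13_def k23_def using absc by force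
  have ksum: "\<forall>e\<in>E. k12 e + k13 e + k23 e = c e"
    unfolding k12_def k13_def k23_def using absw by force
  have k1: "\<forall>e\<in>E. 0 \<le> k12 e" and k2: "\<forall>e\<in>E. 0 \<le> k13 e" and k3: "\<forall>e\<in>E. 0 \<le> k23 e" using knn by auto
  have f12: "is_flow V E src tgt k12 T w12"
    using absc z0 T by (intro flow_intro) (auto simp: k12_def Dw12)
  have f13: "is_flow V E src tgt k13 T w13"
    using w0 z0 T by (intro flow_intro) (auto simp: k13_def Dw13 Dw12)
  have f23: "is_flow V E src tgt k23 T y"
    using y0 by (intro flow_intro) (auto simp: k23_def)
  have Dw12p: "D w12 p = H" using t unfolding Dw12 m_def by simp
  have Dw12q: "D w12 q = - H" using t zq unfolding Dw12 by simp
  have Dw12r: "D w12 r = 0" using zr unfolding Dw12 by simp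
  define H2 where "H2 = (Sp + Sr - Sq) / 2"
  define H3 where "H3 = (Sq + Sr - Sp) / 2"
  have Hs: "H + H2 = Sp" "H + H3 = Sq" "H2 + H3 = Sr" unfolding H_def H2_def H3_def by (simp_all add: field_simps)
  have M: "mutual_info V E src tgt c T p q / 2 = H" "mutual_info V E src tgt c T p r / 2 = H2"
    "mutual_info V E src tgt c T q r / 2 = H3" unfolding Ipq Ipr Iqr H_def H2_def H3_def by simp_all
  have Dw13p: "D w13 p = H2" using Dw13[of p] Dwp Dw12p Hs by simp
  have Dw13r: "D w13 r = - H2" using Dw13[of r] Dwr Dw12r unfolding H2_def by (simp add: field_simps)
  have Dyq: "D y q = H3" using Dy[of q] gq h unfolding H3_def by (simp add: field_simps)
  have Dyr: "D y r = - H3" using Dy[of r] g hr unfolding H3_def by (simp add: field_simps)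
  have L1: "H \<le> S_net V E src tgt k12 T {p}"
    using S_upper[OF k1 f12, of "{p}"] Dw12p by (simp add: F1)
  have L2: "H \<le> S_net V E src tgt k12 T {q}"
    using S_upper[OF k1 flow_neg[OF f12], of "{q}"] Dw12q by (simp add: F1 D_neg)
  have L3: "H2 \<le> S_net V E src tgt k13 T {p}"
    using S_upper[OF k2 f13, of "{p}"] Dw13p by (simp add: F1)
  have L4: "H2 \<le> S_net V E src tgt k13 T {r}"
    using S_upper[OF k2 flow_neg[OF f13], of "{r}"] Dw13r by (simp add: F1 D_neg)
  have L5: "H3 \<le> S_net V E src tgt k23 T {q}"
    using S_upper[OF k3 f23, of "{q}"] Dyq by (simp add: F1)
  have L6: "H3 \<le> S_net V E src tgt k23 T {r}"
    using S_upper[OF k3 flow_neg[OF f23], of "{r}"] Dyr by (simp add: F1 D_neg)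
  have N: "0 \<le> S_net V E src tgt k12 T {x}" "0 \<le> S_net V E src tgt k13 T {x}" "0 \<le> S_net V E src tgt k23 T {x}" for x
    using S_nonneg k1 k2 k3 by auto
  have U: "S_net V E src tgt k12 T {x} + S_net V E src tgt k13 T {x} + S_net V E src tgt k23 T {x} \<le> S_net V E src tgt c T {x}" for x
    by (rule superadd[OF knn ksum])
  note F = L1 L2 L3 L4 L5 L6 N[of p] N[of q] N[of r] U[of p] U[of q] U[of r] Hs
  have E0: "S_net V E src tgt k12 T {p} = H" using F unfolding Sp_def Sq_def Sr_def by linarith
  have E1: "S_net V E src tgt k12 T {q} = H" using F unfolding Sp_def Sq_def Sr_def by linarith
  have E2: "S_net V E src tgt k12 T {r} = 0" using F unfolding Sp_def Sq_def Sr_def by linarith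
  have E3: "S_net V E src tgt k13 T {p} = H2" using F unfolding Sp_def Sq_def Sr_def by linarith
  have E4: "S_net V E src tgt k13 T {r} = H2" using F unfolding Sp_def Sq_def Sr_def by linarith
  have E5: "S_net V E src tgt k13 T {q} = 0" using F unfolding Sp_def Sq_def Sr_def by linarith
  have E6: "S_net V E src tgt k23 T {q} = H3" using F unfolding Sp_def Sq_def Sr_def by linarith
  have E7: "S_net V E src tgt k23 T {r} = H3" using F unfolding Sp_def Sq_def Sr_def by linarith
  have E8: "S_net V E src tgt k23 T {p} = 0" using F unfolding Sp_def Sq_def Sr_def by linarith
  have Q: "S_net V E src tgt k12 T {p} + S_net V E src tgt k13 T {p} + S_net V E src tgt k23 T {p} = S_net V E src tgt c T {p}"
    "S_net V E src tgt k12 T {q} + S_net V E src tgt k13 T {q} + S_net V E src tgt k23 T {q} = S_net V E src tgt c T {q}"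
    "S_net V E src tgt k12 T {r} + S_net V E src tgt k13 T {r} + S_net V E src tgt k23 T {r} = S_net V E src tgt c T {r}"
    using E0 E1 E2 E3 E4 E5 E6 E7 E8 Hs unfolding Sp_def Sq_def Sr_def by simp_all
  show ?thesis unfolding M using Q knn ksum E0 E1 E2 E3 E4 E5 E6 E7 E8 by blast
qed

end
theorem theorem4:
  fixes V :: "'v set" and E :: "'e set" and src tgt :: "'e \<Rightarrow> 'v"
    and c :: "'e \<Rightarrow> real" and A :: "nat \<Rightarrow> 'v"
  assumes net: "network V E src tgt c {A 1, A 2, A 3}"
    and distinct: "A 1 \<noteq> A 2" "A 1 \<noteq> A 3" "A 2 \<noteq> A 3"
  shows "\<exists>cc :: nat \<Rightarrow> nat \<Rightarrow> 'e \<Rightarrow> real.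
    (\<forall>i j. 1 \<le> i \<and> i < j \<and> j \<le> 3 \<longrightarrow> (\<forall>e\<in>E. 0 \<le> cc i j e)) \<and>
    (\<forall>e\<in>E. cc 1 2 e + cc 1 3 e + cc 2 3 e = c e) \<and>
    (\<forall>i j. 1 \<le> i \<and> i < j \<and> j \<le> 3 \<longrightarrow>
       S_net V E src tgt (cc i j) {A 1, A 2, A 3} {A i} = mutual_info V E src tgt c {A 1, A 2, A 3} (A i) (A j) / 2 \<and>
       S_net V E src tgt (cc i j) {A 1, A 2, A 3} {A j} = mutual_info V E src tgt c {A 1, A 2, A 3} (A i) (A j) / 2 \<and>
       (\<forall>k\<in>{1,2,3}. k \<noteq> i \<and> k \<noteq> j \<longrightarrow> S_net V E src tgt (cc i j) {A 1, A 2, A 3} {A k} = 0) \<and>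
       (\<forall>p\<in>{1,2,3}. \<forall>q\<in>{1,2,3}. p \<noteq> q \<and> pos_connected E src tgt (cc i j) (A p) (A q)
           \<longrightarrow> {p, q} = {i, j}) \<and>
       mutual_info V E src tgt (cc i j) {A 1, A 2, A 3} (A i) (A j) = mutual_info V E src tgt c {A 1, A 2, A 3} (A i) (A j)) \<and>
    (\<forall>k\<in>{1,2,3}. S_net V E src tgt (cc 1 2) {A 1, A 2, A 3} {A k} + S_net V E src tgt (cc 1 3) {A 1, A 2, A 3} {A k}
        + S_net V E src tgt (cc 2 3) {A 1, A 2, A 3} {A k} = S_net V E src tgt c {A 1, A 2, A 3} {A k})"
proof -
  let ?T = "{A 1, A 2, A 3}"
  have finV: "finite V" and finE: "finite E" and ends: "\<forall>e\<in>E. src e \<in> V \<and> tgt e \<in> V"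
    and cn: "\<forall>e\<in>E. 0 \<le> c e" and TV: "?T \<subseteq> V"
    using net unfolding network_def by auto
  interpret nw V E src tgt using finV finE ends by unfold_locales
  obtain k12 k13 k23 where K: "\<forall>e\<in>E. 0 \<le> k12 e \<and> 0 \<le> k13 e \<and> 0 \<le> k23 e" "\<forall>e\<in>E. k12 e + k13 e + k23 e = c e"
    "S_net V E src tgt k12 ?T {A 1} = mutual_info V E src tgt c ?T (A 1) (A 2) / 2"
    "S_net V E src tgt k12 ?T {A 2} = mutual_info V E src tgt c ?T (A 1) (A 2) / 2"
    "S_net V E src tgt k12 ?T {A 3} = 0"
    "S_net V E src tgt k13 ?T {A 1} = mutual_info V E src tgt c ?T (A 1) (A 3) / 2"
    "S_net V E src tgt k13 ?T {A 3} = mutual_info V E src tgt c ?T (A 1) (A 3) / 2"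
    "S_net V E src tgt k13 ?T {A 2} = 0"
    "S_net V E src tgt k23 ?T {A 2} = mutual_info V E src tgt c ?T (A 2) (A 3) / 2"
    "S_net V E src tgt k23 ?T {A 3} = mutual_info V E src tgt c ?T (A 2) (A 3) / 2"
    "S_net V E src tgt k23 ?T {A 1} = 0"
    "S_net V E src tgt k12 ?T {A 1} + S_net V E src tgt k13 ?T {A 1} + S_net V E src tgt k23 ?T {A 1} = S_net V E src tgt c ?T {A 1}"
    "S_net V E src tgt k12 ?T {A 2} + S_net V E src tgt k13 ?T {A 2} + S_net V E src tgt k23 ?T {A 2} = S_net V E src tgt c ?T {A 2}"
    "S_net V E src tgt k12 ?T {A 3} + S_net V E src tgt k13 ?T {A 3} + S_net V E src tgt k23 ?T {A 3} = S_net V E src tgt c ?T {A 3}"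
    using decomp[OF cn refl distinct TV] by blast
  have k1: "\<forall>e\<in>E. 0 \<le> k12 e" and k2: "\<forall>e\<in>E. 0 \<le> k13 e" and k3: "\<forall>e\<in>E. 0 \<le> k23 e"
    using K(1) by auto
  have T13: "?T = {A 1, A 3, A 2}" and T23: "?T = {A 2, A 3, A 1}" by auto
  have P12: "mutual_info V E src tgt k12 ?T (A 1) (A 2) = mutual_info V E src tgt c ?T (A 1) (A 2) \<and>
    (\<forall>x\<in>?T. \<forall>y\<in>?T. x \<noteq> y \<and> pos_connected E src tgt k12 x y \<longrightarrow> {x, y} = {A 1, A 2})"
    by (rule pairprops[OF k1 refl distinct TV K(3,4,5)])
  have P13: "mutual_info V E src tgt k13 ?T (A 1) (A 3) = mutual_info V E src tgt c ?T (A 1) (A 3) \<and>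
    (\<forall>x\<in>?T. \<forall>y\<in>?T. x \<noteq> y \<and> pos_connected E src tgt k13 x y \<longrightarrow> {x, y} = {A 1, A 3})"
    using pairprops[OF k2 T13 distinct(2,1) distinct(3)[symmetric] _ K(6,7,8)] TV T13 by simp
  have P23: "mutual_info V E src tgt k23 ?T (A 2) (A 3) = mutual_info V E src tgt c ?T (A 2) (A 3) \<and>
    (\<forall>x\<in>?T. \<forall>y\<in>?T. x \<noteq> y \<and> pos_connected E src tgt k23 x y \<longrightarrow> {x, y} = {A 2, A 3})"
    using pairprops[OF k3 T23 distinct(3) distinct(1,2)[symmetric] _ K(9,10,11)] TV T23 by simp
  define cc :: "nat \<Rightarrow> nat \<Rightarrow> 'e \<Rightarrow> real" where
    "cc i j = (if i = 1 \<and> j = 2 then k12 else if i = 1 \<and> j = 3 then k13 else k23)" for i j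
  have Ainj: "p = q" if "p \<in> {1,2,3}" "q \<in> {1,2,3}" "A p = A q" for p q :: nat
    using that distinct by auto
  have conn: "{p, q} = {i, j}"
    if "p \<in> {1,2,3}" "q \<in> {1,2,3}" "{A p, A q} = {A i, A j}" "i \<in> {1,2,3}" "j \<in> {1,2,3}" for p q i j :: nat
  proof -
    from that(3) have "(A p = A i \<and> A q = A j) \<or> (A p = A j \<and> A q = A i)" by (simp add: doubleton_eq_iff)
    then have "(p = i \<and> q = j) \<or> (p = j \<and> q = i)" using Ainj that by blast
    then show ?thesis by auto
  qed
  have Tin: "A p \<in> ?T" if "p \<in> {1,2,3}" for p :: nat using that by auto
  have pc: "\<forall>p\<in>{1,2,3}. \<forall>q\<in>{1,2,3}. p \<noteq> q \<and> pos_connected E src tgt kk (A p) (A q) \<longrightarrow> {p, q} = {i, j}"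
    if P: "\<forall>x\<in>?T. \<forall>y\<in>?T. x \<noteq> y \<and> pos_connected E src tgt kk x y \<longrightarrow> {x, y} = {A i, A j}"
      and ij: "i \<in> {1,2,3}" "j \<in> {1,2,3}" for kk i j
  proof (intro ballI impI)
    fix p q :: nat assume pq: "p \<in> {1,2,3}" "q \<in> {1,2,3}" "p \<noteq> q \<and> pos_connected E src tgt kk (A p) (A q)"
    have "A p \<noteq> A q" using pq Ainj by blast
    then have "{A p, A q} = {A i, A j}" using P Tin[OF pq(1)] Tin[OF pq(2)] pq(3) by blast
    then show "{p, q} = {i, j}" using conn pq ij by blast
  qed
  define cc :: "nat \<Rightarrow> nat \<Rightarrow> 'e \<Rightarrow> real" where
    "cc i j = (if i = 1 \<and> j = 2 then k12 else if i = 1 \<and> j = 3 then k13 else k23)" for i j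
  have c12: "cc 1 2 = k12" and c13: "cc 1 3 = k13" and c23: "cc 2 3 = k23" unfolding cc_def by simp_all
  have G: "(\<forall>e\<in>E. 0 \<le> cc i j e) \<and>
       S_net V E src tgt (cc i j) ?T {A i} = mutual_info V E src tgt c ?T (A i) (A j) / 2 \<and>
       S_net V E src tgt (cc i j) ?T {A j} = mutual_info V E src tgt c ?T (A i) (A j) / 2 \<and>
       (\<forall>k\<in>{1,2,3}. k \<noteq> i \<and> k \<noteq> j \<longrightarrow> S_net V E src tgt (cc i j) ?T {A k} = 0) \<and>
       (\<forall>p\<in>{1,2,3}. \<forall>q\<in>{1,2,3}. p \<noteq> q \<and> pos_connected E src tgt (cc i j) (A p) (A q)
           \<longrightarrow> {p, q} = {i, j}) \<and>
       mutual_info V E src tgt (cc i j) ?T (A i) (A j) = mutual_info V E src tgt c ?T (A i) (A j)"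
    if "1 \<le> i \<and> i < j \<and> j \<le> 3" for i j :: nat
  proof -
    have "(i = 1 \<and> j = 2) \<or> (i = 1 \<and> j = 3) \<or> (i = 2 \<and> j = 3)" using that by auto
    then consider "i = 1" "j = 2" | "i = 1" "j = 3" | "i = 2" "j = 3" by blast
    then show ?thesis
    proof cases
      case 1
      have z: "\<forall>k\<in>{1,2,3}. k \<noteq> 1 \<and> k \<noteq> 2 \<longrightarrow> S_net V E src tgt k12 ?T {A k} = 0"
        using K(5) by auto
      have pcc: "\<forall>p\<in>{1,2,3}. \<forall>q\<in>{1,2,3}. p \<noteq> q \<and> pos_connected E src tgt k12 (A p) (A q) \<longrightarrow> {p, q} = {1, 2}"
        by (rule pc) (use P12 in auto)
      show ?thesis unfolding 1 c12
        by (intro conjI k1 K(3) K(4) z pcc P12[THEN conjunct1])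
    next
      case 2
      have z: "\<forall>k\<in>{1,2,3}. k \<noteq> 1 \<and> k \<noteq> 3 \<longrightarrow> S_net V E src tgt k13 ?T {A k} = 0"
        using K(8) by auto
      have pcc: "\<forall>p\<in>{1,2,3}. \<forall>q\<in>{1,2,3}. p \<noteq> q \<and> pos_connected E src tgt k13 (A p) (A q) \<longrightarrow> {p, q} = {1, 3}"
        by (rule pc) (use P13 in auto)
      show ?thesis unfolding 2 c13
        by (intro conjI k2 K(6) K(7) z pcc P13[THEN conjunct1])
    next
      case 3
      have z: "\<forall>k\<in>{1,2,3}. k \<noteq> 2 \<and> k \<noteq> 3 \<longrightarrow> S_net V E src tgt k23 ?T {A k} = 0"
        using K(11) by auto
      have pcc: "\<forall>p\<in>{1,2,3}. \<forall>q\<in>{1,2,3}. p \<noteq> q \<and> pos_connected E src tgt k23 (A p) (A q) \<longrightarrow> {p, q} = {2, 3}"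
        by (rule pc) (use P23 in auto)
      show ?thesis unfolding 3 c23
        by (intro conjI k3 K(9) K(10) z pcc P23[THEN conjunct1])
    qed
  qed
  have Ssum: "\<forall>k\<in>{1,2,3}. S_net V E src tgt (cc 1 2) ?T {A k} + S_net V E src tgt (cc 1 3) ?T {A k}
        + S_net V E src tgt (cc 2 3) ?T {A k} = S_net V E src tgt c ?T {A k}"
    unfolding c12 c13 c23 using K(12,13,14) by auto
  have Cs: "\<forall>e\<in>E. cc 1 2 e + cc 1 3 e + cc 2 3 e = c e" unfolding c12 c13 c23 using K(2) by simp
  show ?thesis
    apply (rule exI[of _ cc])
    apply (intro conjI)
    subgoal using G by (intro allI impI) (rule conjunct1, blast)
    subgoal by (rule Cs)
    subgoal using G by (intro allI impI) (rule conjunct2, blast)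
    subgoal by (rule Ssum)
    done
qed

end
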